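(* Let $\epsilon>0$ and $\nu\ge1$ be fixed. Then there exists $K_{\epsilon,\nu}>0$ such that for all sufficiently large $n$, \[ \sup_{z\in\mathbb{C}}\int_{2^{-\epsilon}}^{2^\epsilon}r'\,dr'\,e^{-n|\log r'|}|\log r'|^{\nu-1}\int_{-\pi}^{\pi}\frac{d\theta'}{|z'-z|}\le K_{\epsilon,\nu}\frac{\log(n)}{n^\nu}, \] where $z'=r'e^{i\theta'}$. Moreover, for each $\rho>2^\epsilon$ there exists $K_{\epsilon,\nu,\rho}>0$ such that for all sufficiently large $n$, \[ \sup_{|\log|z||\ge\log\rho}\int_{2^{-\epsilon}}^{2^\epsilon}r'\,dr'\,e^{-n|\log r'|}|\log r'|^{\nu-1}\int_{-\pi}^{\pi}\frac{d\theta'}{|z'-z|}\le\frac{K_{\epsilon,\nu,\rho}}{n^\nu}. \] *)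

theory Defs
  imports "HOL-Analysis.Analysis"
begin

definition angular_int :: "real \<Rightarrow> complex \<Rightarrow> ennreal" where
  "angular_int r z =
     (\<integral>\<^sup>+ \<theta>. indicator {-pi..pi} \<theta> * ennreal (1 / cmod (complex_of_real r * cis \<theta> - z)) \<partial>lborel)"

definition radial_int :: "real \<Rightarrow> real \<Rightarrow> nat \<Rightarrow> complex \<Rightarrow> ennreal" where
  "radial_int \<epsilon> \<nu> n z =
     (\<integral>\<^sup>+ r. indicator {2 powr (-\<epsilon>)..2 powr \<epsilon>} r *
        ennreal (r * exp (- real n * \<bar>ln r\<bar>) * \<bar>ln r\<bar> powr (\<nu> - 1)) * angular_int r z \<partial>lborel)"

end

theory Submission
  imports Defs
begin

lemma sym_int:
  fixes g :: "real \<Rightarrow> real"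
  assumes g: "(g has_integral I) {0..L}" and nn: "\<And>x. 0 \<le> x \<Longrightarrow> x \<le> L \<Longrightarrow> 0 \<le> g x"
    and L: "L \<ge> 0" and gm[measurable]: "g \<in> borel_measurable borel"
  shows "(\<integral>\<^sup>+x. indicator {t-L..t+L} x * ennreal (g \<bar>x - t\<bar>) \<partial>lborel) = ennreal (2*I)"
proof -
  have "(\<integral>\<^sup>+x. indicator {t-L..t+L} x * ennreal (g \<bar>x - t\<bar>) \<partial>lborel)
     = (\<integral>\<^sup>+x. indicator {t-L..t+L} (t + 1 * x) * ennreal (g \<bar>(t + 1 * x) - t\<bar>) \<partial>lborel)"
    using nn_integral_real_affine[of "\<lambda>x. indicator {t-L..t+L} x * ennreal (g \<bar>x - t\<bar>)" 1 t] by simp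
  also have "\<dots> = (\<integral>\<^sup>+x. ennreal (indicator {-L..L} x * g \<bar>x\<bar>) \<partial>lborel)"
    by (intro nn_integral_cong) (auto simp: indicator_def)
  also have "\<dots> = ennreal (I + I)"
  proof (rule nn_integral_has_integral_lebesgue)
    show "\<And>x. x \<in> {-L..L} \<Longrightarrow> 0 \<le> g \<bar>x\<bar>" using nn by auto
    have g1: "((\<lambda>x. g \<bar>x\<bar>) has_integral I) {0..L}"
      using g by (subst has_integral_cong[where g=g]) auto
    have "((\<lambda>x. (\<lambda>x. g \<bar>x\<bar>) (-x)) has_integral I) {-L..-0}"
      using g1 by (subst has_integral_reflect_real) 
    then have g2: "((\<lambda>x. g \<bar>x\<bar>) has_integral I) {-L..0}" by simp
    show "((\<lambda>x. g \<bar>x\<bar>) has_integral I + I) {-L..L}"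
      by (rule has_integral_combine[OF _ _ g2 g1]) (use L in auto)
  qed
  finally show ?thesis by simp
qed

lemma powr_int:
  assumes "p > -1" "L \<ge> 0"
  shows "(\<integral>\<^sup>+x. indicator {t-L..t+L} x * ennreal (\<bar>x - t\<bar> powr p) \<partial>lborel)
        = ennreal (2 * (L powr (p+1) / (p+1)))"
  by (rule sym_int[OF has_integral_powr_from_0]) (use assms in auto)

lemma exp_int:
  assumes "c > 0" "L \<ge> 0"
  shows "(\<integral>\<^sup>+x. indicator {t-L..t+L} x * ennreal (exp (- c * \<bar>x - t\<bar>)) \<partial>lborel)
        \<le> ennreal (2 / c)"
proof -
  have "((\<lambda>x. exp (- c * x)) has_integral ((\<lambda>x. - exp (- c * x) / c) L - (\<lambda>x. - exp (- c * x) / c) 0)) {0..L}"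
  proof (rule fundamental_theorem_of_calculus)
    fix x :: real assume "x \<in> {0..L}"
    show "((\<lambda>x. - exp (- c * x) / c) has_vector_derivative exp (- c * x)) (at x within {0..L})"
      using assms(1)
      by (auto intro!: derivative_eq_intros simp: has_real_derivative_iff_has_vector_derivative[symmetric])
  qed (use assms in auto)
  then have "(\<integral>\<^sup>+x. indicator {t-L..t+L} x * ennreal (exp (- c * \<bar>x - t\<bar>)) \<partial>lborel)
      = ennreal (2 * ((\<lambda>x. - exp (- c * x) / c) L - (\<lambda>x. - exp (- c * x) / c) 0))"
    by (intro sym_int) (use assms in auto)
  also have "\<dots> \<le> ennreal (2 / c)"
    using assms by (intro ennreal_leI) (auto simp: field_simps)
  finally show ?thesis .
qed

lemma cis_bound:
  fixes y :: real assumes "\<bar>y\<bar> \<le> pi"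
  shows "\<bar>y\<bar> / pi \<le> cmod (cis y - 1)"
proof -
  have sinb: "x / 3 \<le> sin x" if "0 \<le> x" "x \<le> pi/2" for x :: real
  proof -
    have a: "t / 2 \<le> sin t" if "0 \<le> t" "t \<le> pi/3" for t :: real
    proof -
      have "(\<lambda>t. sin t - t/2) 0 \<le> (\<lambda>t. sin t - t/2) t"
      proof (rule DERIV_nonneg_imp_nondecreasing[of 0 t])
        fix u assume u: "0 \<le> u" "u \<le> t"
        have "((\<lambda>t. sin t - t/2) has_real_derivative (cos u - 1/2)) (at u)"
          by (auto intro!: derivative_eq_intros)
        moreover have "cos (pi/3) \<le> cos u"
          by (rule cos_monotone_0_pi_le) (use u that in auto)
        then have "0 \<le> cos u - 1/2" by (simp add: cos_60)
        ultimately show "\<exists>y. ((\<lambda>t. sin t - t/2) has_real_derivative y) (at u) \<and> 0 \<le> y" by blast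
      qed (use that in auto)
      then show ?thesis by simp
    qed
    show ?thesis
    proof (cases "x \<le> pi/3")
      case True then show ?thesis using a[of x] that by auto
    next
      case False
      have "sin (pi/3) \<le> sin x"
        by (rule sin_monotone_2pi_le) (use False that in auto)
      moreover have "pi/3/2 \<le> sin (pi/3)" by (rule a) auto
      ultimately show ?thesis using that by auto
    qed
  qed
  have ab: "\<bar>sin y\<bar> \<le> cmod (cis y - 1)" "\<bar>cos y - 1\<bar> \<le> cmod (cis y - 1)"
    using abs_Im_le_cmod[of "cis y - 1"] abs_Re_le_cmod[of "cis y - 1"] by auto
  show ?thesis
  proof (cases "\<bar>y\<bar> \<le> pi/2")
    case True
    have "\<bar>y\<bar>/3 \<le> \<bar>sin y\<bar>"
    proof (cases "y \<ge> 0")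
      case True then show ?thesis using sinb[of y] \<open>\<bar>y\<bar> \<le> pi/2\<close> by auto
    next
      case False then show ?thesis using sinb[of "-y"] \<open>\<bar>y\<bar> \<le> pi/2\<close> by auto
    qed
    moreover have "\<bar>y\<bar> / pi \<le> \<bar>y\<bar>/3" using pi_gt3
      by (intro divide_left_mono) auto
    ultimately show ?thesis using ab by linarith
  next
    case False
    have "cos \<bar>y\<bar> \<le> cos (pi/2)" by (rule cos_monotone_0_pi_le) (use False assms in auto)
    then have "cos \<bar>y\<bar> \<le> 0" by simp
    then have "cos y \<le> 0" by simp
    then have "1 \<le> cmod (cis y - 1)" using ab by linarith
    moreover have "\<bar>y\<bar> / pi \<le> 1" using assms by auto
    ultimately show ?thesis by linarith
  qed
qed

lemma max_powr:
  fixes d e m \<alpha> :: real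
  assumes "0 < d" "0 < e" "0 < \<alpha>" "\<alpha> < 1" "d \<le> m" "e \<le> m"
  shows "1 / m \<le> d powr (-\<alpha>) * e powr (\<alpha> - 1)"
proof -
  have "d powr \<alpha> * e powr (1 - \<alpha>) \<le> m powr \<alpha> * m powr (1 - \<alpha>)"
    using assms by (intro mult_mono powr_mono2) auto
  also have "\<dots> = m" using assms by (simp add: powr_add[symmetric])
  finally have *: "d powr \<alpha> * e powr (1 - \<alpha>) \<le> m" .
  have pos: "0 < d powr \<alpha> * e powr (1 - \<alpha>)" using assms by auto
  have "1 / m \<le> 1 / (d powr \<alpha> * e powr (1 - \<alpha>))"
    using * pos by (intro divide_left_mono) auto
  also have "\<dots> = d powr (-\<alpha>) * e powr (-(1 - \<alpha>))"
    by (simp only: powr_minus_divide) simp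
  also have "\<dots> = d powr (-\<alpha>) * e powr (\<alpha> - 1)" by simp
  finally show ?thesis .
qed


lemma pointwise_ang:
  fixes r s \<phi> \<theta> p a \<alpha> :: real
  assumes a: "0 < a" "a \<le> 1" "a \<le> r" and rs: "r \<noteq> s" "0 \<le> s" and al: "0 < \<alpha>" "\<alpha> < 1"
    and cp: "cis p = cis \<phi>" and yb: "\<bar>\<theta> - p\<bar> \<le> pi" and yn: "\<theta> \<noteq> p"
  shows "1 / cmod (complex_of_real r * cis \<theta> - complex_of_real s * cis \<phi>)
     \<le> (2*pi/a) * \<bar>r - s\<bar> powr (-\<alpha>) * \<bar>\<theta> - p\<bar> powr (\<alpha> - 1)"
proof -
  define y where "y = \<theta> - p"
  define d where "d = \<bar>r - s\<bar>"
  define c where "c = a / (2*pi)"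
  have d: "d > 0" using rs by (auto simp: d_def)
  have c: "0 < c" "c \<le> 1" using a pi_gt3 by (auto simp: c_def field_simps)
  have y: "y \<noteq> 0" "\<bar>y\<bar> \<le> pi" using yn yb by (auto simp: y_def)
  have "complex_of_real r * cis \<theta> - complex_of_real s * cis \<phi> = cis \<phi> * (complex_of_real r * cis y - complex_of_real s)"
  proof -
    have "cis \<theta> = cis p * cis (\<theta> - p)" by (simp add: cis_mult)
    then show ?thesis using cp by (simp add: y_def algebra_simps)
  qed
  then have meq: "cmod (complex_of_real r * cis \<theta> - complex_of_real s * cis \<phi>) = cmod (complex_of_real r * cis y - complex_of_real s)"
    by (simp add: norm_mult)
  define m where "m = cmod (complex_of_real r * cis y - complex_of_real s)"
  have m1: "d \<le> m"
    using norm_triangle_ineq3[of "complex_of_real r * cis y" "complex_of_real s"] a rs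
    by (simp add: m_def d_def norm_mult)
  have eq: "complex_of_real r * (cis y - 1) = (complex_of_real r * cis y - complex_of_real s) - complex_of_real (r - s)"
    by (simp add: algebra_simps)
  have "cmod (complex_of_real r * (cis y - 1)) \<le> m + cmod (complex_of_real (r - s))"
    unfolding eq m_def by (rule norm_triangle_ineq4)
  then have "r * cmod (cis y - 1) \<le> m + d"
    using a by (simp add: d_def norm_mult del: of_real_diff)
  moreover have "r * (\<bar>y\<bar> / pi) \<le> r * cmod (cis y - 1)"
    using cis_bound[OF y(2)] a by (intro mult_left_mono) auto
  moreover have "a * (\<bar>y\<bar> / pi) \<le> r * (\<bar>y\<bar> / pi)"
    using a by (intro mult_right_mono) auto
  ultimately have "a * \<bar>y\<bar> / pi \<le> 2 * m" using m1 by auto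
  then have m2: "c * \<bar>y\<bar> \<le> m" by (simp add: c_def field_simps)
  have "1 / m \<le> d powr (-\<alpha>) * (c * \<bar>y\<bar>) powr (\<alpha> - 1)"
    by (rule max_powr) (use d c y al m1 m2 in auto)
  also have "\<dots> = d powr (-\<alpha>) * c powr (\<alpha> - 1) * \<bar>y\<bar> powr (\<alpha> - 1)"
    using c by (simp add: powr_mult)
  also have "\<dots> \<le> d powr (-\<alpha>) * c powr (-1) * \<bar>y\<bar> powr (\<alpha> - 1)"
    using c al by (intro mult_right_mono mult_left_mono powr_mono') auto
  also have "c powr (-1) = 2*pi/a" using c a by (simp add: powr_minus_divide c_def)
  finally have f: "1 / m \<le> d powr (-\<alpha>) * (2*pi/a) * \<bar>y\<bar> powr (\<alpha> - 1)" .
  have e: "(2*pi/a) * \<bar>r - s\<bar> powr (-\<alpha>) * \<bar>\<theta> - p\<bar> powr (\<alpha> - 1) = d powr (-\<alpha>) * (2*pi/a) * \<bar>y\<bar> powr (\<alpha> - 1)"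
    by (simp add: d_def y_def)
  show ?thesis unfolding meq e using f unfolding m_def .
qed


lemma cis_shift: "cis (\<phi> + 2*pi) = cis \<phi>" "cis (\<phi> - 2*pi) = cis \<phi>"
  by (auto simp: cis.ctr cos_add sin_add cos_diff sin_diff)

lemma angular_bound:
  assumes a: "0 < a" "a \<le> 1" "a \<le> r" and rs: "r \<noteq> cmod z" and al: "0 < \<alpha>" "\<alpha> < 1"
  shows "angular_int r z \<le> ennreal (48 * pi^2 / a * \<bar>r - cmod z\<bar> powr (-\<alpha>) / \<alpha>)"
proof -
  define s where "s = cmod z"
  define \<phi> where "\<phi> = Arg z"
  have z: "z = complex_of_real s * cis \<phi>" using rcis_cmod_Arg[of z] by (simp add: rcis_def s_def \<phi>_def)
  have \<phi>b: "-pi < \<phi>" "\<phi> \<le> pi" using Arg_bounded[of z] by (auto simp: \<phi>_def)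
  define B where "B = (2*pi/a) * \<bar>r - s\<bar> powr (-\<alpha>)"
  have B: "0 \<le> B" using a by (simp add: B_def)
  define h where "h p \<theta> = ennreal B * (indicator {p - 4*pi..p + 4*pi} \<theta> * ennreal (\<bar>\<theta> - p\<bar> powr (\<alpha> - 1)))" for p \<theta>
  have hm[measurable]: "h p \<in> borel_measurable borel" for p unfolding h_def by measurable
  have ae: "AE \<theta> in lborel. \<theta> \<noteq> \<phi> \<and> \<theta> \<noteq> \<phi> + 2*pi \<and> \<theta> \<noteq> \<phi> - 2*pi"
    using AE_lborel_singleton[of \<phi>] AE_lborel_singleton[of "\<phi> + 2*pi"] AE_lborel_singleton[of "\<phi> - 2*pi"]
    by eventually_elim auto
  have pw: "indicator {-pi..pi} \<theta> * ennreal (1 / cmod (complex_of_real r * cis \<theta> - z))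
      \<le> h \<phi> \<theta> + h (\<phi>+2*pi) \<theta> + h (\<phi>-2*pi) \<theta>"
    if nt: "\<theta> \<noteq> \<phi> \<and> \<theta> \<noteq> \<phi> + 2*pi \<and> \<theta> \<noteq> \<phi> - 2*pi" for \<theta>
  proof (cases "\<theta> \<in> {-pi..pi}")
    case False then show ?thesis by simp
  next
    case True
    have "\<exists>p \<in> {\<phi>, \<phi>+2*pi, \<phi>-2*pi}. \<bar>\<theta> - p\<bar> \<le> pi"
    proof (cases "\<theta> - \<phi> > pi")
      case True then show ?thesis using \<open>\<theta> \<in> {-pi..pi}\<close> \<phi>b by (intro bexI[of _ "\<phi>+2*pi"]) auto
    next
      case F: False
      show ?thesis
      proof (cases "\<theta> - \<phi> < -pi")
        case True then show ?thesis using \<open>\<theta> \<in> {-pi..pi}\<close> \<phi>b by (intro bexI[of _ "\<phi>-2*pi"]) auto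
      next
        case False then show ?thesis using F by (intro bexI[of _ "\<phi>"]) auto
      qed
    qed
    then obtain p where p: "p \<in> {\<phi>, \<phi>+2*pi, \<phi>-2*pi}" "\<bar>\<theta> - p\<bar> \<le> pi" by blast
    have cp: "cis p = cis \<phi>" using p(1) cis_shift by auto
    have tp: "\<theta> \<noteq> p" using p(1) nt by auto
    have "1 / cmod (complex_of_real r * cis \<theta> - z) \<le> B * \<bar>\<theta> - p\<bar> powr (\<alpha> - 1)"
      unfolding z B_def using pointwise_ang[OF a _ _ al cp p(2) tp, of s] rs
      by (simp add: s_def mult.assoc)
    then have "indicator {-pi..pi} \<theta> * ennreal (1 / cmod (complex_of_real r * cis \<theta> - z)) \<le> h p \<theta>"
      using True p(2) B pi_gt3 by (auto simp: h_def indicator_def ennreal_mult[symmetric] intro!: ennreal_leI)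
    also have "h p \<theta> \<le> h \<phi> \<theta> + h (\<phi>+2*pi) \<theta> + h (\<phi>-2*pi) \<theta>"
      using p(1) by (auto intro: add_increasing add_increasing2)
    finally show ?thesis .
  qed
  have hi: "(\<integral>\<^sup>+\<theta>. h p \<theta> \<partial>lborel) \<le> ennreal (B * (8*pi/\<alpha>))" for p
  proof -
    have "(\<integral>\<^sup>+\<theta>. h p \<theta> \<partial>lborel) = ennreal B * (\<integral>\<^sup>+\<theta>. indicator {p - 4*pi..p + 4*pi} \<theta> * ennreal (\<bar>\<theta> - p\<bar> powr (\<alpha> - 1)) \<partial>lborel)"
      unfolding h_def by (rule nn_integral_cmult) measurable
    also have "\<dots> = ennreal B * ennreal (2 * ((4*pi) powr (\<alpha> - 1 + 1) / (\<alpha> - 1 + 1)))"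
      using powr_int[of "\<alpha> - 1" "4*pi" p] al by simp
    also have "\<dots> \<le> ennreal B * ennreal (8*pi/\<alpha>)"
    proof (intro mult_left_mono ennreal_leI)
      have "(4*pi) powr \<alpha> \<le> (4*pi) powr 1" using al pi_gt3 by (intro powr_mono) auto
      then show "2 * ((4*pi) powr (\<alpha> - 1 + 1) / (\<alpha> - 1 + 1)) \<le> 8*pi/\<alpha>"
        using al pi_gt3 by (auto simp: field_simps)
    qed auto
    also have "ennreal B * ennreal (8*pi/\<alpha>) = ennreal (B * (8*pi/\<alpha>))"
      by (rule ennreal_mult[symmetric]) (use B al in auto)
    finally show ?thesis .
  qed
  have "angular_int r z \<le> (\<integral>\<^sup>+\<theta>. h \<phi> \<theta> + h (\<phi>+2*pi) \<theta> + h (\<phi>-2*pi) \<theta> \<partial>lborel)"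
    unfolding angular_int_def by (rule nn_integral_mono_AE) (use ae pw in auto)
  also have "\<dots> = (\<integral>\<^sup>+\<theta>. h \<phi> \<theta> \<partial>lborel) + (\<integral>\<^sup>+\<theta>. h (\<phi>+2*pi) \<theta> \<partial>lborel) + (\<integral>\<^sup>+\<theta>. h (\<phi>-2*pi) \<theta> \<partial>lborel)"
    by (simp add: nn_integral_add)
  also have "\<dots> \<le> ennreal (B * (8*pi/\<alpha>)) + ennreal (B * (8*pi/\<alpha>)) + ennreal (B * (8*pi/\<alpha>))"
    by (intro add_mono hi)
  also have "\<dots> = ennreal (B * (8*pi/\<alpha>) + B * (8*pi/\<alpha>) + B * (8*pi/\<alpha>))"
    using B al by (simp add: ennreal_plus[symmetric] del: ennreal_plus)
  also have "B * (8*pi/\<alpha>) + B * (8*pi/\<alpha>) + B * (8*pi/\<alpha>) = 48 * pi^2 / a * \<bar>r - cmod z\<bar> powr (-\<alpha>) / \<alpha>"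
    using a al by (simp add: B_def s_def power2_eq_square field_simps)
  finally show ?thesis .
qed


lemma powk_exp:
  fixes y k :: real assumes "0 \<le> k" "0 \<le> y"
  shows "y powr k \<le> (k+1) powr k * exp y"
proof (cases "y = 0")
  case True then show ?thesis by simp
next
  case False
  then have y: "y > 0" using assms by auto
  have "y / (k+1) \<le> exp (y / (k+1))" using exp_ge_add_one_self[of "y/(k+1)"] by linarith
  then have "y \<le> (k+1) * exp (y / (k+1))" using assms by (simp add: field_simps)
  then have "y powr k \<le> ((k+1) * exp (y / (k+1))) powr k"
    using y assms by (intro powr_mono2) auto
  also have "\<dots> = (k+1) powr k * exp (y / (k+1)) powr k"
    using assms by (simp add: powr_mult)
  also have "exp (y / (k+1)) powr k = exp (k * (y / (k+1)))"
    by (simp add: powr_def)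
  also have "\<dots> \<le> exp y"
    using assms y by (simp add: field_simps)
  finally show ?thesis using assms by (simp add: mult_left_mono)
qed

lemma weight_bound:
  fixes a b r k N :: real
  assumes ab: "0 < a" "a \<le> 1" "1 \<le> b" and r: "a \<le> r" "r \<le> b" and k: "0 \<le> k" and N: "0 < N"
  shows "r * exp (- N * \<bar>ln r\<bar>) * \<bar>ln r\<bar> powr k
     \<le> b * a powr (-k) * (2*b) powr k * (k+1) powr k * N powr (-k) * exp (- (N/(2*b)) * \<bar>r - 1\<bar>)"
proof (cases "r = 1")
  case True then show ?thesis using ab by simp
next
  case False
  define L where "L = \<bar>ln r\<bar>"
  define u where "u = \<bar>r - 1\<bar>"
  have rpos: "r > 0" using ab r by auto
  have u: "u > 0" using False by (auto simp: u_def)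
  have L: "u / b \<le> L \<and> L \<le> u / a"
  proof (cases "r \<ge> 1")
    case True
    have "ln r \<le> r - 1" using ln_le_minus_one rpos by auto
    moreover have "ln (1/r) \<le> 1/r - 1" using ln_le_minus_one rpos by auto
    ultimately have "1 - 1/r \<le> ln r" "ln r \<le> r - 1" using rpos by (auto simp: ln_div)
    moreover have "(r - 1)/b \<le> 1 - 1/r"
    proof -
      have "(r-1)*r \<le> (r-1)*b" using True r by (intro mult_left_mono) auto
      then have "b + r * r \<le> r + b * r" by (simp add: algebra_simps)
      then show ?thesis using True rpos ab by (simp add: field_simps)
    qed
    moreover have "r - 1 \<le> (r - 1) / a"
    proof -
      have "(r-1)*a \<le> (r-1)*1" using True ab by (intro mult_left_mono) auto
      then show ?thesis using ab by (simp add: field_simps)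
    qed
    ultimately show ?thesis using True by (auto simp: L_def u_def)
  next
    case False
    have "ln r \<le> r - 1" using ln_le_minus_one rpos by auto
    moreover have "ln (1/r) \<le> 1/r - 1" using ln_le_minus_one rpos by auto
    ultimately have "1 - r \<le> - ln r" "- ln r \<le> 1/r - 1" using rpos by (auto simp: ln_div)
    moreover have "(1 - r)/b \<le> 1 - r"
    proof -
      have "(1-r)*1 \<le> (1-r)*b" using False ab by (intro mult_left_mono) auto
      then show ?thesis using ab by (simp add: field_simps)
    qed
    moreover have "1/r - 1 \<le> (1 - r) / a"
    proof -
      have "(1 - r)/r \<le> (1 - r) / a" using False r ab by (intro divide_left_mono) auto
      then show ?thesis using rpos by (simp add: field_simps)
    qed
    moreover have "ln r < 0" using False rpos by auto
    ultimately show ?thesis using False by (auto simp: L_def u_def)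
  qed
  have "N * (u / b) \<le> N * L" using L N by (intro mult_left_mono) auto
  then have e1: "exp (- N * L) \<le> exp (- N * (u / b))" by auto
  have e2: "L powr k \<le> a powr (-k) * u powr k"
  proof -
    have "L powr k \<le> (u / a) powr k" using L k u ab by (intro powr_mono2) (auto simp: L_def)
    also have "\<dots> = a powr (-k) * u powr k" using ab u by (simp add: powr_divide powr_minus_divide)
    finally show ?thesis .
  qed
  define y where "y = N * u / (2*b)"
  have y: "y > 0" using N u ab by (auto simp: y_def)
  have uy: "u = (2*b/N) * y" using N ab by (simp add: y_def)
  have e3: "u powr k * exp (- y) \<le> (2*b) powr k * (k+1) powr k * N powr (-k)"
  proof -
    have "u powr k = (2*b/N) powr k * y powr k" unfolding uy using N ab y by (intro powr_mult; auto)
    also have "\<dots> \<le> (2*b/N) powr k * ((k+1) powr k * exp y)"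
      using powk_exp[OF k, of y] y by (intro mult_left_mono) auto
    finally have "u powr k * exp (- y) \<le> (2*b/N) powr k * ((k+1) powr k * exp y) * exp (-y)"
      by (intro mult_right_mono) auto
    also have "\<dots> = (2*b/N) powr k * (k+1) powr k" by (simp add: exp_minus field_simps)
    also have "\<dots> = (2*b) powr k * (k+1) powr k * N powr (-k)"
      using N ab by (simp add: powr_divide powr_minus_divide)
    finally show ?thesis .
  qed
  have "r * exp (- N * L) * L powr k \<le> b * exp (- N * (u / b)) * (a powr (-k) * u powr k)"
    using r rpos e1 e2 by (intro mult_mono) auto
  also have "exp (- N * (u / b)) = exp (- y) * exp (- (N/(2*b)) * u)"
    unfolding y_def mult_exp_exp by (rule arg_cong[where f=exp]) (simp add: field_simps)
  also have "b * (exp (- y) * exp (- (N/(2*b)) * u)) * (a powr (-k) * u powr k)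
      = b * a powr (-k) * (u powr k * exp (- y)) * exp (- (N/(2*b)) * u)"
    by (simp add: mult_ac)
  also have "\<dots> \<le> b * a powr (-k) * ((2*b) powr k * (k+1) powr k * N powr (-k)) * exp (- (N/(2*b)) * u)"
    using e3 ab by (intro mult_right_mono mult_left_mono) auto
  finally show ?thesis by (simp add: L_def u_def mult_ac)
qed


lemma ab_facts:
  fixes \<epsilon> :: real assumes "\<epsilon> > 0"
  shows "0 < 2 powr (-\<epsilon>)" "2 powr (-\<epsilon>) < 1" "1 < 2 powr \<epsilon>" "2 powr (-\<epsilon>) = 1 / 2 powr \<epsilon>"
  using assms by (auto simp: powr_minus_divide)

lemma part2:
  fixes \<epsilon> \<nu> \<rho> :: real
  assumes e: "\<epsilon> > 0" and nu: "\<nu> \<ge> 1" and rho: "\<rho> > 2 powr \<epsilon>"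
  shows "\<exists>K>0. \<forall>\<^sub>F n in sequentially.
              (SUP z\<in>{z. z = 0 \<or> \<bar>ln (cmod z)\<bar> \<ge> ln \<rho>}. radial_int \<epsilon> \<nu> n z)
                \<le> ennreal (K / real n powr \<nu>)"
proof -
  define a where "a = 2 powr (-\<epsilon>)"
  define b where "b = 2 powr \<epsilon>"
  have ab: "0 < a" "a < 1" "1 < b" "a = 1 / b" using ab_facts[OF e] by (auto simp: a_def b_def)
  define k where "k = \<nu> - 1"
  have k: "0 \<le> k" using nu by (simp add: k_def)
  define C4 where "C4 = b * a powr (-k) * (2*b) powr k * (k+1) powr k"
  have C4: "0 < C4" using ab k by (simp add: C4_def)
  define \<delta>0 where "\<delta>0 = min (\<rho> - b) (a - 1/\<rho>)"
  have rb: "\<rho> > b" using rho by (simp add: b_def)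
  have \<delta>0: "\<delta>0 > 0"
  proof -
    have "1/\<rho> < 1/b" using rb ab by (intro divide_strict_left_mono) auto
    then show ?thesis using rb ab by (auto simp: \<delta>0_def)
  qed
  define A where "A = 48 * pi^2 / a * \<delta>0 powr (-(1/2)) / (1/2)"
  have A: "0 < A" using ab \<delta>0 by (simp add: A_def)
  define K where "K = A * C4 * (4*b)"
  have K: "K > 0" using A C4 ab by (simp add: K_def)
  have dist: "\<delta>0 \<le> \<bar>r - cmod z\<bar>" if r: "a \<le> r" "r \<le> b" and z: "z = 0 \<or> \<bar>ln (cmod z)\<bar> \<ge> ln \<rho>" for r z
  proof (cases "z = 0")
    case True
    have "0 < 1/\<rho>" using rb ab by auto
    moreover have "\<delta>0 \<le> a - 1/\<rho>" by (simp add: \<delta>0_def)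
    ultimately have "\<delta>0 \<le> r" using r by linarith
    then show ?thesis using r ab True by simp
  next
    case False
    then have s: "cmod z > 0" by auto
    have rpos: "\<rho> > 0" using rb ab by auto
    show ?thesis
    proof (cases "ln (cmod z) \<ge> 0")
      case True
      then have "ln (cmod z) \<ge> ln \<rho>" using z False by auto
      then have "cmod z \<ge> \<rho>" using s rpos by simp
      then show ?thesis using r by (auto simp: \<delta>0_def)
    next
      case F: False
      then have "ln (cmod z) \<le> - ln \<rho>" using z False by auto
      also have "- ln \<rho> = ln (1/\<rho>)" using rpos by (simp add: ln_div)
      finally have "cmod z \<le> 1/\<rho>" using s rpos by simp
      then show ?thesis using r by (auto simp: \<delta>0_def)
    qed
  qed
  show ?thesis
  proof (intro exI[of _ K] conjI K eventually_sequentiallyI[of 1] SUP_least)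
    fix n :: nat and z assume n: "1 \<le> n" and z: "z \<in> {z. z = 0 \<or> \<bar>ln (cmod z)\<bar> \<ge> ln \<rho>}"
    define N where "N = real n"
    have N: "N \<ge> 1" using n by (simp add: N_def)
    define c where "c = N / (2*b)"
    have c: "c > 0" using N ab by (simp add: c_def)
    have pw: "indicator {a..b} r * ennreal (r * exp (- real n * \<bar>ln r\<bar>) * \<bar>ln r\<bar> powr (\<nu> - 1)) * angular_int r z
       \<le> ennreal (A * C4 * N powr (-k)) * (indicator {1-b..1+b} r * ennreal (exp (- c * \<bar>r - 1\<bar>)))" for r
    proof (cases "r \<in> {a..b}")
      case False then show ?thesis by simp
    next
      case True
      have d: "\<delta>0 \<le> \<bar>r - cmod z\<bar>" using dist[of r z] True z by auto
      have ang: "angular_int r z \<le> ennreal A"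
      proof -
        have "angular_int r z \<le> ennreal (48 * pi^2 / a * \<bar>r - cmod z\<bar> powr (-(1/2)) / (1/2))"
          by (rule angular_bound) (use True ab d \<delta>0 in auto)
        also have "\<dots> \<le> ennreal A"
          unfolding A_def using d \<delta>0 ab
          by (intro ennreal_leI divide_right_mono mult_left_mono powr_mono2') auto
        finally show ?thesis .
      qed
      have w: "r * exp (- real n * \<bar>ln r\<bar>) * \<bar>ln r\<bar> powr (\<nu> - 1) \<le> C4 * N powr (-k) * exp (- c * \<bar>r - 1\<bar>)"
        using weight_bound[of a b r k N] True ab k N
        by (simp add: C4_def c_def k_def N_def mult_ac)
      have w0: "0 \<le> r * exp (- real n * \<bar>ln r\<bar>) * \<bar>ln r\<bar> powr (\<nu> - 1)"
      proof -
        have "0 < r" using True ab(1) by auto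
        then show ?thesis by simp
      qed
      have "indicator {a..b} r * ennreal (r * exp (- real n * \<bar>ln r\<bar>) * \<bar>ln r\<bar> powr (\<nu> - 1)) * angular_int r z
          = ennreal (r * exp (- real n * \<bar>ln r\<bar>) * \<bar>ln r\<bar> powr (\<nu> - 1)) * angular_int r z"
        using True by simp
      also have "\<dots> \<le> ennreal (C4 * N powr (-k) * exp (- c * \<bar>r - 1\<bar>)) * ennreal A"
        using w ang by (rule mult_mono[OF ennreal_leI]) auto
      also have "\<dots> = ennreal (A * C4 * N powr (-k)) * (indicator {1-b..1+b} r * ennreal (exp (- c * \<bar>r - 1\<bar>)))"
      proof -
        have r1: "r \<in> {1-b..1+b}" using True ab(1) ab(3) by auto
        show ?thesis using r1 A C4 by (simp add: ennreal_mult[symmetric] mult_ac)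
      qed
      finally show ?thesis .
    qed
    have "radial_int \<epsilon> \<nu> n z \<le> (\<integral>\<^sup>+r. ennreal (A * C4 * N powr (-k)) * (indicator {1-b..1+b} r * ennreal (exp (- c * \<bar>r - 1\<bar>))) \<partial>lborel)"
      unfolding radial_int_def a_def[symmetric] b_def[symmetric] by (rule nn_integral_mono) (rule pw)
    also have "\<dots> = ennreal (A * C4 * N powr (-k)) * (\<integral>\<^sup>+r. indicator {1-b..1+b} r * ennreal (exp (- c * \<bar>r - 1\<bar>)) \<partial>lborel)"
      by (rule nn_integral_cmult) measurable
    also have "\<dots> \<le> ennreal (A * C4 * N powr (-k)) * ennreal (2 / c)"
      using exp_int[OF c, of b 1] ab by (intro mult_left_mono) auto
    also have "\<dots> = ennreal (K / real n powr \<nu>)"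
    proof -
      have "N powr \<nu> = N powr (k + 1)" by (simp add: k_def)
      also have "\<dots> = N powr k * N powr 1" by (rule powr_add)
      also have "\<dots> = N powr k * N" using N by simp
      finally have "N powr \<nu> = N powr k * N" .
      then have "A * C4 * N powr (-k) * (2 / c) = K / N powr \<nu>"
        using N ab by (simp add: K_def c_def powr_minus_divide field_simps)
      then show ?thesis using A C4 c by (simp add: ennreal_mult[symmetric] N_def)
    qed
    finally show "radial_int \<epsilon> \<nu> n z \<le> ennreal (K / real n powr \<nu>)" .
  qed
qed


lemma part1:
  fixes \<epsilon> \<nu> :: real
  assumes e: "\<epsilon> > 0" and nu: "\<nu> \<ge> 1"
  shows "\<exists>K>0. \<forall>\<^sub>F n in sequentially.
            (SUP z. radial_int \<epsilon> \<nu> n z) \<le> ennreal (K * ln (real n) / real n powr \<nu>)"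
proof -
  define a where "a = 2 powr (-\<epsilon>)"
  define b where "b = 2 powr \<epsilon>"
  have ab: "0 < a" "a < 1" "1 < b" "a = 1 / b" using ab_facts[OF e] by (auto simp: a_def b_def)
  define k where "k = \<nu> - 1"
  have k: "0 \<le> k" using nu by (simp add: k_def)
  define C4 where "C4 = b * a powr (-k) * (2*b) powr k * (k+1) powr k"
  have C4: "0 < C4" using ab k by (simp add: C4_def)
  define C1 where "C1 = 48 * pi^2 / a"
  have C1: "0 < C1" using ab by (simp add: C1_def)
  define K where "K = C1 * C4 * (4*b + 4) * exp 2"
  have K: "K > 0" using C1 C4 ab by (simp add: K_def)
  show ?thesis
  proof (intro exI[of _ K] conjI K eventually_sequentiallyI[of 9] SUP_least)
    fix n :: nat and z assume n: "9 \<le> n"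
    define N where "N = real n"
    have N: "N \<ge> 9" using n by (simp add: N_def)
    define LN where "LN = ln N"
    have "exp 2 \<le> N"
    proof -
      have "exp (2::real) = exp (1 + 1)" by simp
      also have "\<dots> = exp 1 * exp 1" by (rule exp_add)
      also have "\<dots> \<le> 3 * 3" using exp_le by (intro mult_mono) auto
      finally show ?thesis using N by simp
    qed
    then have LN: "2 \<le> LN" unfolding LN_def using N by (simp add: ln_ge_iff)
    define \<alpha> where "\<alpha> = 1 / LN"
    have al: "0 < \<alpha>" "\<alpha> \<le> 1/2" using LN by (auto simp: \<alpha>_def field_simps)
    define \<delta> where "\<delta> = N powr (-2)"
    have \<delta>: "0 < \<delta>" using N by (simp add: \<delta>_def)
    have \<delta>a: "\<delta> powr (-\<alpha>) = exp 2"
    proof -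
      have "\<delta> powr (-\<alpha>) = N powr (-2 * -\<alpha>)" by (simp add: \<delta>_def powr_powr)
      also have "\<dots> = exp (2 * \<alpha> * LN)" using N by (simp add: powr_def LN_def mult_ac)
      also have "2 * \<alpha> * LN = 2" using LN by (simp add: \<alpha>_def)
      finally show ?thesis .
    qed
    have \<delta>1: "\<delta> powr (-\<alpha> + 1) = \<delta> * exp 2"
    proof -
      have "\<delta> powr (-\<alpha> + 1) = \<delta> powr (-\<alpha>) * \<delta> powr 1" by (rule powr_add)
      then show ?thesis using \<delta> \<delta>a by simp
    qed
    have \<delta>N: "\<delta> \<le> 1 / N"
    proof -
      have "\<delta> = 1 / N powr 2" by (simp add: \<delta>_def powr_minus_divide)
      also have "N powr 2 = N * N" using N by (simp add: powr_numeral power2_eq_square)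
      finally have d: "\<delta> = 1 / (N * N)" .
      have "1 * N \<le> N * N" using N by (intro mult_right_mono) auto
      then show ?thesis unfolding d using N by (intro divide_left_mono) auto
    qed
    define c where "c = N / (2*b)"
    have c: "c > 0" using N ab by (simp add: c_def)
    define s where "s = cmod z"
    define X where "X = C1 * LN * C4 * N powr (-k)"
    have X: "X \<ge> 0" using C1 C4 LN by (simp add: X_def)
    define f1 where "f1 r = indicator {1-b..1+b} r * ennreal (exp (- c * \<bar>r - 1\<bar>))" for r
    define f2 where "f2 r = indicator {s-\<delta>..s+\<delta>} r * ennreal (\<bar>r - s\<bar> powr (-\<alpha>))" for r
    have pw: "indicator {a..b} r * ennreal (r * exp (- real n * \<bar>ln r\<bar>) * \<bar>ln r\<bar> powr (\<nu> - 1)) * angular_int r z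
       \<le> ennreal X * (ennreal (exp 2) * f1 r + f2 r)" if rs: "r \<noteq> s" for r
    proof (cases "r \<in> {a..b}")
      case False then show ?thesis by simp
    next
      case True
      define w where "w = r * exp (- real n * \<bar>ln r\<bar>) * \<bar>ln r\<bar> powr (\<nu> - 1)"
      define E where "E = exp (- c * \<bar>r - 1\<bar>)"
      define D where "D = \<bar>r - s\<bar> powr (-\<alpha>)"
      define i2 where "i2 = (indicator {s-\<delta>..s+\<delta>} r :: real)"
      have D: "0 \<le> D" by (simp add: D_def)
      have E: "0 < E" "E \<le> 1" using c by (auto simp: E_def)
      have i2: "0 \<le> i2" by (simp add: i2_def)
      have ang: "angular_int r z \<le> ennreal (C1 * LN * D)"
      proof -
        have "angular_int r z \<le> ennreal (48 * pi^2 / a * \<bar>r - cmod z\<bar> powr (-\<alpha>) / \<alpha>)"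
          by (rule angular_bound) (use True ab rs al in \<open>auto simp: s_def\<close>)
        also have "48 * pi^2 / a * \<bar>r - cmod z\<bar> powr (-\<alpha>) / \<alpha> = C1 * LN * D"
          using LN by (simp add: C1_def D_def s_def \<alpha>_def)
        finally show ?thesis .
      qed
      have w: "w \<le> C4 * N powr (-k) * E"
        using weight_bound[of a b r k N] True ab k N
        by (simp add: C4_def c_def k_def N_def E_def w_def mult_ac)
      have w0: "0 \<le> w"
      proof -
        have "0 < r" using True ab(1) by auto
        then show ?thesis by (simp add: w_def)
      qed
      have key: "w * D \<le> C4 * N powr (-k) * (exp 2 * E + i2 * D)"
      proof (cases "r \<in> {s-\<delta>..s+\<delta>}")
        case True
        have "w * D \<le> (C4 * N powr (-k) * E) * D" using w D by (rule mult_right_mono)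
        also have "\<dots> = C4 * N powr (-k) * (E * D)" by (simp add: mult_ac)
        also have "\<dots> \<le> C4 * N powr (-k) * (exp 2 * E + i2 * D)"
        proof (rule mult_left_mono)
          have "E * D \<le> 1 * D" using E D by (intro mult_right_mono) auto
          moreover have "0 \<le> exp 2 * E" using E by simp
          ultimately show "E * D \<le> exp 2 * E + i2 * D" using True by (simp add: i2_def)
        qed (use C4 in simp)
        finally show ?thesis .
      next
        case False
        then have "\<delta> \<le> \<bar>r - s\<bar>" by auto
        then have "D \<le> \<delta> powr (-\<alpha>)" unfolding D_def using \<delta> al
          by (intro powr_mono2') auto
        then have Dl: "D \<le> exp 2" using \<delta>a by simp
        have "w * D \<le> (C4 * N powr (-k) * E) * exp 2" using w Dl D w0 C4 E
          by (intro mult_mono) auto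
        also have "\<dots> = C4 * N powr (-k) * (exp 2 * E + i2 * D)"
          using False by (simp add: i2_def)
        finally show ?thesis .
      qed
      have r1: "r \<in> {1-b..1+b}" using True ab(1) ab(3) by auto
      have "indicator {a..b} r * ennreal w * angular_int r z = ennreal w * angular_int r z"
        using True by simp
      also have "\<dots> \<le> ennreal w * ennreal (C1 * LN * D)"
        using ang by (rule mult_left_mono) auto
      also have "\<dots> = ennreal (C1 * LN * (w * D))"
        using w0 C1 LN D by (simp add: ennreal_mult[symmetric] mult_ac)
      also have "\<dots> \<le> ennreal (C1 * LN * (C4 * N powr (-k) * (exp 2 * E + i2 * D)))"
        using key C1 LN by (intro ennreal_leI mult_left_mono) auto
      also have "\<dots> = ennreal X * (ennreal (exp 2) * f1 r + f2 r)"
      proof -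
        have "f1 r = ennreal E" using r1 by (simp add: f1_def E_def)
        moreover have "f2 r = ennreal (i2 * D)" by (simp add: f2_def i2_def D_def indicator_mult_ennreal)
        ultimately have eq: "ennreal (exp 2) * f1 r + f2 r = ennreal (exp 2 * E + i2 * D)"
          using E i2 D by (simp add: ennreal_mult[symmetric] ennreal_plus[symmetric] del: ennreal_plus)
        have m1: "ennreal X * ennreal (exp 2 * E + i2 * D) = ennreal (X * (exp 2 * E + i2 * D))"
          by (rule ennreal_mult[symmetric]) (use X E i2 D in auto)
        have m2: "X * (exp 2 * E + i2 * D) = C1 * LN * (C4 * N powr (-k) * (exp 2 * E + i2 * D))"
          by (simp add: X_def)
        show ?thesis by (simp only: eq m1 m2)
      qed
      finally show ?thesis by (simp add: w_def)
    qed
    have f1m[measurable]: "f1 \<in> borel_measurable borel" unfolding f1_def by measurable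
    have f2m[measurable]: "f2 \<in> borel_measurable borel" unfolding f2_def by measurable
    have "radial_int \<epsilon> \<nu> n z \<le> (\<integral>\<^sup>+r. ennreal X * (ennreal (exp 2) * f1 r + f2 r) \<partial>lborel)"
      unfolding radial_int_def a_def[symmetric] b_def[symmetric]
    proof (rule nn_integral_mono_AE)
      show "AE r in lborel. indicator {a..b} r * ennreal (r * exp (- real n * \<bar>ln r\<bar>) * \<bar>ln r\<bar> powr (\<nu> - 1)) * angular_int r z
         \<le> ennreal X * (ennreal (exp 2) * f1 r + f2 r)"
        using AE_lborel_singleton[of s] by eventually_elim (rule pw)
    qed
    also have "\<dots> = ennreal X * (ennreal (exp 2) * (\<integral>\<^sup>+r. f1 r \<partial>lborel) + (\<integral>\<^sup>+r. f2 r \<partial>lborel))"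
      by (simp add: nn_integral_cmult nn_integral_add)
    also have "\<dots> \<le> ennreal X * (ennreal (exp 2) * ennreal (2 / c) + ennreal (2 * (\<delta> powr (-\<alpha> + 1) / (-\<alpha> + 1))))"
    proof -
      have "(\<integral>\<^sup>+r. f1 r \<partial>lborel) \<le> ennreal (2 / c)"
        unfolding f1_def using exp_int[OF c, of b 1] ab by auto
      moreover have "(\<integral>\<^sup>+r. f2 r \<partial>lborel) = ennreal (2 * (\<delta> powr (-\<alpha> + 1) / (-\<alpha> + 1)))"
        unfolding f2_def using powr_int[of "-\<alpha>" \<delta> s] al \<delta> by auto
      ultimately show ?thesis by (intro mult_left_mono add_mono) auto
    qed
    also have "\<dots> \<le> ennreal (K * ln (real n) / real n powr \<nu>)"
    proof -
      have t2: "2 * (\<delta> powr (-\<alpha> + 1) / (-\<alpha> + 1)) \<le> 4 * exp 2 / N"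
      proof -
        have "2 * (\<delta> powr (-\<alpha> + 1) / (-\<alpha> + 1)) = 2 * \<delta> * exp 2 / (1 - \<alpha>)" by (subst \<delta>1) simp
        also have "\<dots> \<le> 2 * \<delta> * exp 2 / (1/2)"
          using al \<delta> by (intro divide_left_mono) auto
        also have "\<dots> \<le> 4 * exp 2 / N"
          using \<delta>N N by (simp add: field_simps)
        finally show ?thesis .
      qed
      have t1: "2 / c = 4 * b / N" by (simp add: c_def)
      have pn: "N powr \<nu> = N powr k * N"
      proof -
        have "N powr \<nu> = N powr (k + 1)" by (simp add: k_def)
        also have "\<dots> = N powr k * N powr 1" by (rule powr_add)
        also have "\<dots> = N powr k * N" using N by simp
        finally show ?thesis .
      qed
      have "ennreal X * (ennreal (exp 2) * ennreal (2 / c) + ennreal (2 * (\<delta> powr (-\<alpha> + 1) / (-\<alpha> + 1))))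
          = ennreal (X * (exp 2 * (2 / c) + 2 * (\<delta> powr (-\<alpha> + 1) / (-\<alpha> + 1))))"
        using X c \<delta> al by (simp add: ennreal_mult[symmetric] ennreal_plus[symmetric] del: ennreal_plus)
      also have "\<dots> \<le> ennreal (X * (exp 2 * (4 * b / N) + 4 * exp 2 / N))"
        using t2 X by (intro ennreal_leI mult_left_mono add_mono) (auto simp: t1)
      also have "X * (exp 2 * (4 * b / N) + 4 * exp 2 / N) = K * ln (real n) / real n powr \<nu>"
        using N by (simp add: X_def K_def LN_def N_def[symmetric] pn powr_minus_divide field_simps)
      finally show ?thesis .
    qed
    finally show "radial_int \<epsilon> \<nu> n z \<le> ennreal (K * ln (real n) / real n powr \<nu>)" .
  qed
qed

theorem lemma3p14:
  fixes \<epsilon> \<nu> :: real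
  assumes "\<epsilon> > 0" and "\<nu> \<ge> 1"
  shows "(\<exists>K>0. \<forall>\<^sub>F n in sequentially.
            (SUP z. radial_int \<epsilon> \<nu> n z) \<le> ennreal (K * ln (real n) / real n powr \<nu>))
       \<and> (\<forall>\<rho>. \<rho> > 2 powr \<epsilon> \<longrightarrow>
            (\<exists>K>0. \<forall>\<^sub>F n in sequentially.
              (SUP z\<in>{z. z = 0 \<or> \<bar>ln (cmod z)\<bar> \<ge> ln \<rho>}. radial_int \<epsilon> \<nu> n z)
                \<le> ennreal (K / real n powr \<nu>)))"
  using part1[OF assms] part2[OF assms] by blast

end
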